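(* Let $(X_n)_{n\ge 0}$ be a discrete-time Markov chain with state space $\mathbb{R}^d$ whose transition probabilities have densities with respect to Lebesgue measure: $p_n(x,y)=p_{n,n+1}(x,y)$ denotes the one-step transition density from time $n$ to time $n+1$, and $p_{n,m}(x,y)$, $m\ge n$, denotes the $(m-n)$-step transition density (with $p_{n,n}(x,\cdot)$ interpreted as the Dirac distribution $\delta_x$). Fix $N\in\mathbb{N}$ and, for $0\le m<N$, functions $\psi_m:\mathbb{R}^d\times\mathbb{R}^d\to\mathbb{R}_+$ such that for each $m$ and each $y$ the function $$q_m(y,\cdot):=\frac{p_{N-m-1}(\cdot,y)}{\psi_m(y,\cdot)}$$ is a probability density on $\mathbb{R}^d$. For $y\in\mathbb{R}^d$ let $(Y^y_m,\mathcal{Y}^y_m)_{0\le m\le N}$ be the process defined by $Y^y_0=y$, $\mathcal{Y}^y_0=1$, $$\mathbb{P}(Y^y_{m+1}\in dz'\mid Y^y_m=z)=q_m(z,z')\,dz',\qquad \mathcal{Y}^y_{m+1}=\mathcal{Y}^y_m\,\psi_m(Y^y_m,Y^y_{m+1}),\quad 0\le m<N.$$ Then for every $n$ with $0\le n\le N$ and every test function $g:\mathbb{R}^d\to\mathbb{R}$ (for which the expressions are well defined), $$\int g(x)\,p_{n,N}(x,y)\,dx=\mathbb{E}\left[g(Y^y_{N-n})\,\mathcal{Y}^y_{N-n}\right].$$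
   Context: For $n=N$ the left-hand side is understood with $p_{N,N}(x,y)$ the Dirac distribution at $y$, i.e. it equals $g(y)$. *)

theory Defs
  imports "HOL-Probability.Probability"
begin

text \<open>Multi-step transition densities (Chapman--Kolmogorov), valued in ennreal.
  tdens p n k x y is the k-step density p_{n,n+k}(x,y) for k \<ge> 1;
  p n x y is the one-step density p_{n,n+1}(x,y).  The case k = 0 (Dirac)
  is handled separately in pback.\<close>
fun tdens :: "(nat \<Rightarrow> 'a::euclidean_space \<Rightarrow> 'a \<Rightarrow> real) \<Rightarrow> nat \<Rightarrow> nat \<Rightarrow> 'a \<Rightarrow> 'a \<Rightarrow> ennreal" where
  "tdens p n 0 x y = 0"
| "tdens p n (Suc 0) x y = ennreal (p n x y)"
| "tdens p n (Suc (Suc k)) x y =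
     (\<integral>\<^sup>+ z. tdens p n (Suc k) x z * ennreal (p (n + Suc k) z y) \<partial>lborel)"

text \<open>The (sigma-finite) measure p_{n,N}(x,y) dx in the variable x, for fixed y;
  for n = N it is the Dirac measure at y.\<close>
definition pback :: "(nat \<Rightarrow> 'a::euclidean_space \<Rightarrow> 'a \<Rightarrow> real) \<Rightarrow> nat \<Rightarrow> nat \<Rightarrow> 'a \<Rightarrow> 'a measure" where
  "pback p n N y = (if N \<le> n then return borel y else density lborel (\<lambda>x. tdens p n (N - n) x y))"

definition qdens :: "(nat \<Rightarrow> 'a::euclidean_space \<Rightarrow> 'a \<Rightarrow> real) \<Rightarrow> (nat \<Rightarrow> 'a \<Rightarrow> 'a \<Rightarrow> real) \<Rightarrow> nat \<Rightarrow> nat \<Rightarrow> 'a \<Rightarrow> 'a \<Rightarrow> real" where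
  "qdens p psi N m y z = p (N - m - 1) z y / psi m y z"

fun Ylaw :: "(nat \<Rightarrow> 'a::euclidean_space \<Rightarrow> 'a \<Rightarrow> real) \<Rightarrow> (nat \<Rightarrow> 'a \<Rightarrow> 'a \<Rightarrow> real) \<Rightarrow> nat \<Rightarrow> 'a \<Rightarrow> nat \<Rightarrow> ('a \<times> real) measure" where
  "Ylaw p psi N y 0 = return borel (y, 1)"
| "Ylaw p psi N y (Suc m) = Ylaw p psi N y m \<bind>
     (\<lambda>(z, w). distr (density lborel (\<lambda>z'. ennreal (qdens p psi N m z z'))) borel
                       (\<lambda>z'. (z', w * psi m z z')))"

end

theory Submission
  imports Defs
begin

lemma meas2:
  fixes f :: "'a::euclidean_space \<Rightarrow> 'a \<Rightarrow> 'b::topological_space"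
  assumes "(\<lambda>(x, z). f x z) \<in> borel_measurable borel"
    and "a \<in> M \<rightarrow>\<^sub>M borel" "b \<in> M \<rightarrow>\<^sub>M borel"
  shows "(\<lambda>x. f (a x) (b x)) \<in> borel_measurable M"
proof -
  have "(\<lambda>x. (a x, b x)) \<in> M \<rightarrow>\<^sub>M borel"
    using measurable_Pair[OF assms(2,3)] by (simp add: borel_prod)
  from measurable_compose[OF this assms(1)] show ?thesis by simp
qed

lemma fst_borel[measurable]: "f \<in> M \<rightarrow>\<^sub>M (borel :: ('a::second_countable_topology \<times> 'b::second_countable_topology) measure) \<Longrightarrow> (\<lambda>x. fst (f x)) \<in> M \<rightarrow>\<^sub>M borel"
  by (metis borel_prod measurable_compose measurable_fst)
lemma snd_borel[measurable]: "f \<in> M \<rightarrow>\<^sub>M (borel :: ('a::second_countable_topology \<times> 'b::second_countable_topology) measure) \<Longrightarrow> (\<lambda>x. snd (f x)) \<in> M \<rightarrow>\<^sub>M borel"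
  by (metis borel_prod measurable_compose measurable_snd)
lemma snd_lborel[measurable]: "(\<lambda>x. snd x) \<in> M \<Otimes>\<^sub>M lborel \<rightarrow>\<^sub>M borel"
  using measurable_snd[of M lborel] by simp

context
  fixes p :: "nat \<Rightarrow> 'a::euclidean_space \<Rightarrow> 'a \<Rightarrow> real"
  assumes p_meas: "\<And>k. (\<lambda>(x, z). p k x z) \<in> borel_measurable borel"
begin
lemma pm[measurable]: "a \<in> M \<rightarrow>\<^sub>M borel \<Longrightarrow> b \<in> M \<rightarrow>\<^sub>M borel \<Longrightarrow> (\<lambda>x. p k (a x) (b x)) \<in> borel_measurable M"
  by (rule meas2[OF p_meas])

lemma tdens_meas[measurable]: "(\<lambda>(x,y). tdens p n k x y) \<in> borel_measurable borel"
proof (induction k)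
  case 0
  then show ?case by simp
next
  case (Suc k)
  show ?case
  proof (cases k)
    case 0
    then show ?thesis using measurable_compose[OF p_meas[of n] measurable_ennreal] by (simp add: case_prod_beta)
  next
    case (Suc k')
    have m: "(\<lambda>xy. tdens p n (Suc k') (fst xy) (snd xy)) \<in> borel_measurable borel"
      using Suc.IH Suc by (simp add: case_prod_beta)
    have m2: "a \<in> M \<rightarrow>\<^sub>M borel \<Longrightarrow> b \<in> M \<rightarrow>\<^sub>M borel \<Longrightarrow> (\<lambda>x. tdens p n (Suc k') (a x) (b x)) \<in> borel_measurable M" for a b and M :: "'c measure"
      by (rule meas2[where f="\<lambda>x y. tdens p n (Suc k') x y", OF Suc.IH[unfolded Suc]]) 
    show ?thesis using Suc
      apply (simp add: case_prod_beta)
      apply measurable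
       apply (rule m2)
        apply (rule fst_borel[OF measurable_fst])
       apply (rule measurable_snd)
      apply (rule measurable_compose[OF _ measurable_ennreal])
      apply (rule pm)
       apply (rule snd_lborel)
      apply (rule snd_borel[OF measurable_fst])
      done
  qed
qed

lemma lborel2: "f \<in> borel_measurable (borel :: ('a \<times> 'a) measure) \<Longrightarrow> f \<in> borel_measurable (lborel \<Otimes>\<^sub>M (lborel :: 'a measure))"
  by (metis borel_prod measurable_cong_sets sets_lborel sets_pair_measure_cong)

lemma tm: "a \<in> M \<rightarrow>\<^sub>M borel \<Longrightarrow> b \<in> M \<rightarrow>\<^sub>M borel \<Longrightarrow> (\<lambda>x. tdens p n k (a x) (b x)) \<in> borel_measurable M"
  by (rule meas2[where f="\<lambda>x y. tdens p n k x y", OF tdens_meas])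
declare tm[measurable]

lemma ck: "tdens p n (Suc (Suc k)) x y = (\<integral>\<^sup>+ z. ennreal (p n x z) * tdens p (Suc n) (Suc k) z y \<partial>lborel)"
proof (induction k arbitrary: y)
  case 0
  then show ?case by simp
next
  case (Suc k)
  have "tdens p n (Suc (Suc (Suc k))) x y = (\<integral>\<^sup>+ z. tdens p n (Suc (Suc k)) x z * ennreal (p (n + Suc (Suc k)) z y) \<partial>lborel)"
    by simp
  also have "\<dots> = (\<integral>\<^sup>+ z. (\<integral>\<^sup>+ u. ennreal (p n x u) * tdens p (Suc n) (Suc k) u z * ennreal (p (n + Suc (Suc k)) z y) \<partial>lborel) \<partial>lborel)"
    unfolding Suc.IH by (simp add: nn_integral_multc del: tdens.simps)
  also have "\<dots> = (\<integral>\<^sup>+ u. (\<integral>\<^sup>+ z. ennreal (p n x u) * tdens p (Suc n) (Suc k) u z * ennreal (p (n + Suc (Suc k)) z y) \<partial>lborel) \<partial>lborel)"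
  proof (rule pair_sigma_finite.Fubini')
    show "pair_sigma_finite lborel lborel" by (simp add: lborel.sigma_finite_measure_axioms pair_sigma_finite_def)
    show "(\<lambda>(u, z). ennreal (p n x u) * tdens p (Suc n) (Suc k) u z * ennreal (p (n + Suc (Suc k)) z y)) \<in> borel_measurable (lborel \<Otimes>\<^sub>M lborel)"
      apply (rule lborel2)
      apply (simp add: case_prod_beta)
      apply measurable
      done
  qed
  also have "\<dots> = (\<integral>\<^sup>+ u. ennreal (p n x u) * (\<integral>\<^sup>+ z. tdens p (Suc n) (Suc k) u z * ennreal (p (Suc n + Suc k) z y) \<partial>lborel) \<partial>lborel)"
    by (simp add: nn_integral_cmult mult.assoc)
  also have "\<dots> = (\<integral>\<^sup>+ u. ennreal (p n x u) * tdens p (Suc n) (Suc (Suc k)) u y \<partial>lborel)"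
    by simp
  finally show ?case .
qed
end

lemma pred_snd: "Measurable.pred (borel :: ('a::euclidean_space \<times> real) measure) (\<lambda>zw. 0 < snd zw)"
proof -
  have "open {x::'a\<times>real. 0 < snd x}" by (intro open_Collect_less continuous_intros)
  then show ?thesis by (simp add: pred_def borel_open)
qed

lemma AE0: "AE zw in return (borel :: ('a::euclidean_space \<times> real) measure) (y,1). 0 < snd zw"
proof -
  have "(AE zw in return (borel :: ('a \<times> real) measure) (y,1). 0 < snd zw) \<longleftrightarrow> 0 < snd (y, 1::real)"
    by (rule AE_return[OF _ pred_snd]) simp
  then show ?thesis by simp
qed

context
  fixes p :: "nat \<Rightarrow> 'a::euclidean_space \<Rightarrow> 'a \<Rightarrow> real"
    and psi :: "nat \<Rightarrow> 'a \<Rightarrow> 'a \<Rightarrow> real"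
    and N :: nat and y :: 'a
  assumes p_meas: "\<And>k. (\<lambda>(x, z). p k x z) \<in> borel_measurable borel"
    and p_nonneg: "\<And>k x z. p k x z \<ge> 0"
    and psi_meas: "\<And>m. m < N \<Longrightarrow> (\<lambda>(u, z). psi m u z) \<in> borel_measurable borel"
    and psi_pos: "\<And>m u z. m < N \<Longrightarrow> psi m u z > 0"
    and q_prob: "\<And>m u. m < N \<Longrightarrow> prob_space (density lborel (\<lambda>z. ennreal (qdens p psi N m u z)))"
begin

lemma pm'[measurable]: "a \<in> M \<rightarrow>\<^sub>M borel \<Longrightarrow> b \<in> M \<rightarrow>\<^sub>M borel \<Longrightarrow> (\<lambda>x. p k (a x) (b x)) \<in> borel_measurable M"
  by (rule meas2[OF p_meas])

lemma sets_Y: "sets (Ylaw p psi N y k) = sets borel"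
proof (induction k)
  case 0
  then show ?case by simp
next
  case (Suc k)
  have ne: "space (Ylaw p psi N y k) \<noteq> {}"
    using sets_eq_imp_space_eq[OF Suc.IH] by simp
  show ?case
    by (simp only: Ylaw.simps, rule sets_bind[OF _ ne]) (auto simp: split_beta)
qed

lemma space_Y: "space (Ylaw p psi N y k) = UNIV"
  using sets_eq_imp_space_eq[OF sets_Y] by simp

definition K :: "nat \<Rightarrow> 'a \<times> real \<Rightarrow> ('a \<times> real) measure" where
  "K m = (\<lambda>(z, w). distr (density lborel (\<lambda>z'. ennreal (qdens p psi N m z z'))) borel
                       (\<lambda>z'. (z', w * psi m z z')))"

lemma Y_Suc: "Ylaw p psi N y (Suc m) = Ylaw p psi N y m \<bind> K m"
  by (simp add: K_def)

lemma psim: "m < N \<Longrightarrow> a \<in> M \<rightarrow>\<^sub>M borel \<Longrightarrow> b \<in> M \<rightarrow>\<^sub>M borel \<Longrightarrow> (\<lambda>x. psi m (a x) (b x)) \<in> borel_measurable M"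
  by (rule meas2[OF psi_meas])

lemma qm: "m < N \<Longrightarrow> a \<in> M \<rightarrow>\<^sub>M borel \<Longrightarrow> b \<in> M \<rightarrow>\<^sub>M borel \<Longrightarrow> (\<lambda>x. qdens p psi N m (a x) (b x)) \<in> borel_measurable M"
  unfolding qdens_def
  by (rule borel_measurable_divide; (rule pm' psim; assumption))

lemma qm1: "m < N \<Longrightarrow> (\<lambda>z'. ennreal (qdens p psi N m z z')) \<in> borel_measurable lborel"
  apply (rule measurable_compose[OF _ measurable_ennreal])
  apply (rule qm, assumption)
   apply (rule measurable_const, simp)
  apply (rule measurable_ident_sets)
  apply simp
  done

lemma K_meas:
  assumes m: "m < N"
  shows "K m \<in> borel \<rightarrow>\<^sub>M subprob_algebra borel"
proof -
  have eq: "K m = (\<lambda>x. distr (density lborel (\<lambda>z'. ennreal (qdens p psi N m (fst x) z'))) borel (\<lambda>z'. (z', snd x * psi m (fst x) z')))"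
    unfolding K_def by (rule ext) (simp only: split_beta)
  have f0: "(\<lambda>x. (snd x, snd (fst x) * psi m (fst (fst x)) (snd x))) \<in> (borel :: ('a \<times> real) measure) \<Otimes>\<^sub>M lborel \<rightarrow>\<^sub>M borel \<Otimes>\<^sub>M borel"
    apply (rule measurable_Pair)
     apply (rule snd_lborel)
    apply (rule borel_measurable_times)
     apply (rule snd_borel[OF measurable_fst])
    apply (rule psim[OF m])
     apply (rule fst_borel[OF measurable_fst])
    apply (rule snd_lborel)
    done
  have f1: "(\<lambda>(x, z'). (z', snd x * psi m (fst x) z')) \<in> (borel :: ('a \<times> real) measure) \<Otimes>\<^sub>M lborel \<rightarrow>\<^sub>M borel"
    using f0 unfolding borel_prod case_prod_beta' .
  have g1: "(\<lambda>x. density lborel (\<lambda>z'. ennreal (qdens p psi N m (fst x) z'))) \<in> (borel :: ('a \<times> real) measure) \<rightarrow>\<^sub>M subprob_algebra lborel"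
  proof (rule measurable_subprob_algebra)
    fix a :: "'a \<times> real"
    show "subprob_space (density lborel (\<lambda>z'. ennreal (qdens p psi N m (fst a) z')))"
      by (rule prob_space_imp_subprob_space[OF q_prob[OF m]])
    show "sets (density lborel (\<lambda>z'. ennreal (qdens p psi N m (fst a) z'))) = sets lborel"
      by (rule sets_density)
  next
    fix A :: "'a set" assume A: "A \<in> sets lborel"
    have "(\<lambda>x. ennreal (qdens p psi N m (fst (fst x)) (snd x)) * indicator A (snd x)) \<in> borel_measurable ((borel :: ('a \<times> real) measure) \<Otimes>\<^sub>M lborel)"
      apply (rule borel_measurable_times_ennreal)
       apply (rule measurable_compose[OF _ measurable_ennreal])
       apply (rule qm[OF m])
        apply (rule fst_borel[OF measurable_fst])
       apply (rule snd_lborel)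
      apply (rule measurable_compose[OF snd_lborel])
      apply (rule borel_measurable_indicator)
      using A by (simp only: sets_lborel)
    then have "case_prod (\<lambda>a z'. ennreal (qdens p psi N m (fst a) z') * indicator A z') \<in> borel_measurable ((borel :: ('a \<times> real) measure) \<Otimes>\<^sub>M lborel)"
      unfolding case_prod_beta' .
    then have "(\<lambda>a. \<integral>\<^sup>+ z'. ennreal (qdens p psi N m (fst a) z') * indicator A z' \<partial>lborel) \<in> borel_measurable (borel :: ('a \<times> real) measure)"
      by (rule lborel.borel_measurable_nn_integral)
    then show "(\<lambda>a::'a \<times> real. emeasure (density lborel (\<lambda>z'. ennreal (qdens p psi N m (fst a) z'))) A) \<in> borel_measurable borel"
    proof -
      have e: "emeasure (density lborel (\<lambda>z'. ennreal (qdens p psi N m (fst a) z'))) A = (\<integral>\<^sup>+ z'. ennreal (qdens p psi N m (fst a) z') * indicator A z' \<partial>lborel)" for a :: "'a \<times> real"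
        by (rule emeasure_density[OF qm1[OF m] A])
      show ?thesis unfolding e by fact
    qed
  qed
  show ?thesis
    unfolding eq by (rule measurable_distr2[OF f1 g1])
qed

lemma K_meas_Y: "m < N \<Longrightarrow> K m \<in> Ylaw p psi N y k \<rightarrow>\<^sub>M subprob_algebra borel"
  by (subst measurable_cong_sets[OF sets_Y refl]) (rule K_meas)


lemma fK: "m < N \<Longrightarrow> (\<lambda>z'. (z', w * psi m z z')) \<in> density lborel (\<lambda>z'. ennreal (qdens p psi N m z z')) \<rightarrow>\<^sub>M borel"
proof -
  assume m: "m < N"
  have "(\<lambda>z'. (z', w * psi m z z')) \<in> borel \<rightarrow>\<^sub>M (borel \<Otimes>\<^sub>M borel)"
    apply (rule measurable_Pair)
     apply (rule measurable_ident_sets, simp)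
    apply (rule borel_measurable_times)
     apply (rule measurable_const, simp)
    apply (rule psim[OF m])
     apply (rule measurable_const, simp)
    apply (rule measurable_ident_sets, simp)
    done
  then have h: "(\<lambda>z'. (z', w * psi m z z')) \<in> borel \<rightarrow>\<^sub>M borel" by (simp only: borel_prod)
  have S: "sets (density lborel (\<lambda>z'. ennreal (qdens p psi N m z z'))) = sets borel" by simp
  show ?thesis using h unfolding measurable_cong_sets[OF S refl] .
qed


lemma AE_pos: "k \<le> N \<Longrightarrow> AE zw in Ylaw p psi N y k. 0 < snd zw"
proof (induction k)
  case 0
  show ?case unfolding Ylaw.simps(1) by (rule AE0)
next
  case (Suc k)
  from Suc.prems have k: "k < N" by simp
  show ?case
    unfolding Y_Suc AE_bind[OF K_meas_Y[OF k] pred_snd]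
  proof (rule eventually_mono[OF Suc.IH[OF less_imp_le[OF k]]])
    fix zw :: "'a \<times> real" assume w: "0 < snd zw"
    obtain z w where zw: "zw = (z, w)" by force
    show "AE u in K k zw. 0 < snd u"
      unfolding zw K_def prod.case
      apply (subst AE_distr_iff[OF fK[OF k]])
       apply (rule pred_snd[unfolded pred_def])
      apply (rule AE_I2)
      using w psi_pos[OF k, of z] unfolding zw by (simp add: mult_pos_pos)
  qed
qed


definition H :: "nat \<Rightarrow> ('a \<Rightarrow> ennreal) \<Rightarrow> 'a \<Rightarrow> ennreal" where
  "H m h z = (\<integral>\<^sup>+ z'. h z' * ennreal (p m z' z) \<partial>lborel)"

lemma fst_b: "(\<lambda>x. fst x) \<in> (borel :: ('a \<times> 'b::second_countable_topology) measure) \<rightarrow>\<^sub>M borel"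
  by (rule fst_borel[OF measurable_ident_sets[OF refl]])
lemma snd_b: "(\<lambda>x. snd x) \<in> (borel :: ('b::second_countable_topology \<times> 'c::second_countable_topology) measure) \<rightarrow>\<^sub>M borel"
  by (rule snd_borel[OF measurable_ident_sets[OF refl]])

lemma Hm:
  assumes hm: "h \<in> borel_measurable borel"
  shows "(\<lambda>z. H m h z) \<in> borel_measurable borel"
proof -
  have "(\<lambda>x. h (snd x) * ennreal (p m (snd x) (fst x))) \<in> borel_measurable (borel \<Otimes>\<^sub>M lborel)"
    apply (rule borel_measurable_times_ennreal)
     apply (rule measurable_compose[OF snd_lborel hm])
    apply (rule measurable_compose[OF _ measurable_ennreal])
    apply (rule pm')
     apply (rule snd_lborel)
    apply (rule measurable_fst)
    done
  then have "case_prod (\<lambda>z z'. h z' * ennreal (p m z' z)) \<in> borel_measurable (borel \<Otimes>\<^sub>M lborel)"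
    unfolding case_prod_beta' .
  then show ?thesis
    unfolding H_def by (rule lborel.borel_measurable_nn_integral)
qed

lemma gm:
  assumes hm: "h \<in> borel_measurable borel"
  shows "(\<lambda>u::'a \<times> real. h (fst u) * ennreal (snd u)) \<in> borel_measurable borel"
  apply (rule borel_measurable_times_ennreal)
   apply (rule measurable_compose[OF fst_b hm])
  apply (rule measurable_compose[OF snd_b measurable_ennreal])
  done

lemma inner:
  assumes k: "k < N" and w: "0 \<le> w" and hm: "h \<in> borel_measurable borel"
  shows "(\<integral>\<^sup>+ u. h (fst u) * ennreal (snd u) \<partial>K k (z, w)) = H (N - k - 1) h z * ennreal w"
proof -
  let ?D = "density lborel (\<lambda>z'. ennreal (qdens p psi N k z z'))"
  let ?f = "\<lambda>z'. (z', w * psi k z z')"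
  have gm': "(\<lambda>u::'a \<times> real. h (fst u) * ennreal (snd u)) \<in> borel_measurable (distr ?D borel ?f)"
    unfolding measurable_cong_sets[OF sets_distr refl] by (rule gm[OF hm])
  have m1: "(\<lambda>z'. h z' * ennreal (w * psi k z z')) \<in> borel_measurable lborel"
    apply (rule borel_measurable_times_ennreal)
     apply (simp add: hm)
    apply (rule measurable_compose[OF _ measurable_ennreal])
    apply (rule borel_measurable_times)
     apply (rule measurable_const, simp)
    apply (rule psim[OF k])
     apply (rule measurable_const, simp)
    apply (rule measurable_ident_sets, simp)
    done
  have m2: "(\<lambda>z'. h z' * ennreal (p (N - k - 1) z' z)) \<in> borel_measurable lborel"
    apply (rule borel_measurable_times_ennreal)
     apply (simp add: hm)
    apply (rule measurable_compose[OF _ measurable_ennreal])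
    apply (rule pm')
     apply (rule measurable_ident_sets, simp)
    apply (rule measurable_const, simp)
    done
  have "(\<integral>\<^sup>+ u. h (fst u) * ennreal (snd u) \<partial>K k (z, w)) = (\<integral>\<^sup>+ u. h (fst u) * ennreal (snd u) \<partial>distr ?D borel ?f)"
    by (simp only: K_def prod.case)
  also have "\<dots> = (\<integral>\<^sup>+ z'. h (fst (?f z')) * ennreal (snd (?f z')) \<partial>?D)"
    by (rule nn_integral_distr[OF fK[OF k] gm'])
  also have "\<dots> = (\<integral>\<^sup>+ z'. h z' * ennreal (w * psi k z z') \<partial>?D)"
    by (simp only: fst_conv snd_conv)
  also have "\<dots> = (\<integral>\<^sup>+ z'. ennreal (qdens p psi N k z z') * (h z' * ennreal (w * psi k z z')) \<partial>lborel)"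
    by (rule nn_integral_density[OF qm1[OF k] m1])
  also have "\<dots> = (\<integral>\<^sup>+ z'. h z' * ennreal (p (N - k - 1) z' z) * ennreal w \<partial>lborel)"
  proof (rule nn_integral_cong)
    fix z' :: 'a
    have ps: "0 < psi k z z'" by (rule psi_pos[OF k])
    have pn: "0 \<le> p (N - k - 1) z' z" by (rule p_nonneg)
    have "ennreal (qdens p psi N k z z') * ennreal (w * psi k z z') = ennreal (qdens p psi N k z z' * (w * psi k z z'))"
      by (rule ennreal_mult[symmetric]) (use ps pn w in \<open>auto simp: qdens_def\<close>)
    also have "qdens p psi N k z z' * (w * psi k z z') = p (N - k - 1) z' z * w"
      using ps by (simp add: qdens_def field_simps)
    also have "ennreal (p (N - k - 1) z' z * w) = ennreal (p (N - k - 1) z' z) * ennreal w"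
      by (rule ennreal_mult[OF pn w])
    finally show "ennreal (qdens p psi N k z z') * (h z' * ennreal (w * psi k z z')) = h z' * ennreal (p (N - k - 1) z' z) * ennreal w"
      by (metis (no_types, lifting) mult.assoc mult.commute)
  qed
  also have "\<dots> = H (N - k - 1) h z * ennreal w"
    unfolding H_def by (rule nn_integral_multc[OF m2])
  finally show ?thesis .
qed


lemma tdx: "(\<lambda>x. tdens p n k x y') \<in> borel_measurable lborel"
  apply (rule tm[OF p_meas])
   apply (rule measurable_ident_sets, simp)
  apply (rule measurable_const, simp)
  done

lemma stepS:
  assumes hm: "h \<in> borel_measurable borel"
  shows "(\<integral>\<^sup>+ x. tdens p (Suc n) (Suc k') x y * H n h x \<partial>lborel) = (\<integral>\<^sup>+ x. tdens p n (Suc (Suc k')) x y * h x \<partial>lborel)"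
proof -
  have hm': "h \<in> borel_measurable lborel" using hm by simp
  have mf: "(\<lambda>(x, z). ennreal (p n x z) * tdens p (Suc n) (Suc k') z y * h x) \<in> borel_measurable (lborel \<Otimes>\<^sub>M lborel)"
    apply (rule lborel2[OF p_meas])
    unfolding case_prod_beta'
    apply (rule borel_measurable_times_ennreal)+
      apply (rule measurable_compose[OF _ measurable_ennreal])
      apply (rule pm'[OF fst_b snd_b])
     apply (rule tm[OF p_meas snd_b])
     apply (rule measurable_const, simp)
    apply (rule measurable_compose[OF fst_b hm])
    done
  have mz: "(\<lambda>z. ennreal (p n x z) * tdens p (Suc n) (Suc k') z y) \<in> borel_measurable lborel" for x
    apply (rule borel_measurable_times_ennreal)
     apply (rule measurable_compose[OF _ measurable_ennreal])
     apply (rule pm')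
      apply (rule measurable_const, simp)
     apply (rule measurable_ident_sets, simp)
    apply (rule tdx)
    done
  have mx: "(\<lambda>x. h x * ennreal (p n x z)) \<in> borel_measurable lborel" for z
    apply (rule borel_measurable_times_ennreal)
     apply (rule hm')
    apply (rule measurable_compose[OF _ measurable_ennreal])
    apply (rule pm')
     apply (rule measurable_ident_sets, simp)
    apply (rule measurable_const, simp)
    done
  have "(\<integral>\<^sup>+ x. tdens p n (Suc (Suc k')) x y * h x \<partial>lborel)
      = (\<integral>\<^sup>+ x. (\<integral>\<^sup>+ z. ennreal (p n x z) * tdens p (Suc n) (Suc k') z y \<partial>lborel) * h x \<partial>lborel)"
    by (simp only: ck[OF p_meas])
  also have "\<dots> = (\<integral>\<^sup>+ x. (\<integral>\<^sup>+ z. ennreal (p n x z) * tdens p (Suc n) (Suc k') z y * h x \<partial>lborel) \<partial>lborel)"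
    by (rule nn_integral_cong) (rule nn_integral_multc[OF mz, symmetric])
  also have "\<dots> = (\<integral>\<^sup>+ z. (\<integral>\<^sup>+ x. ennreal (p n x z) * tdens p (Suc n) (Suc k') z y * h x \<partial>lborel) \<partial>lborel)"
  proof (rule pair_sigma_finite.Fubini'[symmetric])
    show "pair_sigma_finite lborel lborel" by (simp add: lborel.sigma_finite_measure_axioms pair_sigma_finite_def)
    show "(\<lambda>(x, z). ennreal (p n x z) * tdens p (Suc n) (Suc k') z y * h x) \<in> borel_measurable (lborel \<Otimes>\<^sub>M lborel)"
      by (rule mf)
  qed
  also have "\<dots> = (\<integral>\<^sup>+ z. tdens p (Suc n) (Suc k') z y * (\<integral>\<^sup>+ x. h x * ennreal (p n x z) \<partial>lborel) \<partial>lborel)"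
  proof (rule nn_integral_cong)
    fix z
    have "(\<integral>\<^sup>+ x. ennreal (p n x z) * tdens p (Suc n) (Suc k') z y * h x \<partial>lborel)
        = (\<integral>\<^sup>+ x. tdens p (Suc n) (Suc k') z y * (h x * ennreal (p n x z)) \<partial>lborel)"
      by (rule nn_integral_cong) (simp only: ac_simps)
    also have "\<dots> = tdens p (Suc n) (Suc k') z y * (\<integral>\<^sup>+ x. h x * ennreal (p n x z) \<partial>lborel)"
      by (rule nn_integral_cmult[OF mx])
    finally show "(\<integral>\<^sup>+ x. ennreal (p n x z) * tdens p (Suc n) (Suc k') z y * h x \<partial>lborel)
        = tdens p (Suc n) (Suc k') z y * (\<integral>\<^sup>+ x. h x * ennreal (p n x z) \<partial>lborel)" .
  qed
  also have "\<dots> = (\<integral>\<^sup>+ x. tdens p (Suc n) (Suc k') x y * H n h x \<partial>lborel)"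
    unfolding H_def ..
  finally show ?thesis by (rule sym)
qed

lemma step:
  assumes k: "k < N" and hm: "h \<in> borel_measurable borel"
  shows "(\<integral>\<^sup>+ x. H (N - k - 1) h x \<partial>pback p (N - k) N y) = (\<integral>\<^sup>+ x. h x \<partial>pback p (N - Suc k) N y)"
proof (cases k)
  case 0
  have e1: "pback p (N - k) N y = return borel y" using 0 by (simp add: pback_def)
  have a1: "N - Suc k = N - 1" "N - (N - 1) = Suc 0" "\<not> N \<le> N - 1" using 0 k by auto
  have e2: "pback p (N - Suc k) N y = density lborel (\<lambda>x. ennreal (p (N - 1) x y))"
    unfolding pback_def a1(1,2) tdens.simps(2) using a1(3) by (simp only: if_False)
  have "(\<integral>\<^sup>+ x. H (N - k - 1) h x \<partial>pback p (N - k) N y) = H (N - 1) h y"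
    unfolding e1 using 0 by (simp add: nn_integral_return Hm[OF hm])
  also have "\<dots> = (\<integral>\<^sup>+ x. ennreal (p (N - 1) x y) * h x \<partial>lborel)"
    unfolding H_def by (simp only: mult.commute)
  also have "\<dots> = (\<integral>\<^sup>+ x. h x \<partial>pback p (N - Suc k) N y)"
    unfolding e2
  proof (rule nn_integral_density[symmetric])
    show "(\<lambda>x. ennreal (p (N - 1) x y)) \<in> borel_measurable lborel"
      apply (rule measurable_compose[OF _ measurable_ennreal])
      apply (rule pm')
       apply (rule measurable_ident_sets, simp)
      apply (rule measurable_const, simp)
      done
    show "h \<in> borel_measurable lborel" using hm by simp
  qed
  finally show ?thesis .
next
  case (Suc k')
  define n where "n = N - Suc k"
  have nk: "N - k = Suc n" "N - k - 1 = n" "N - n = Suc (Suc k')" using k Suc by (auto simp: n_def)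
  have a2: "\<not> N \<le> Suc n" "N - Suc n = Suc k'" "\<not> N \<le> n" "N - Suc k = n"
    using k Suc by (auto simp: n_def)
  have e1: "pback p (N - k) N y = density lborel (\<lambda>x. tdens p (Suc n) (Suc k') x y)"
    unfolding pback_def nk(1) using a2 by simp
  have e2: "pback p (N - Suc k) N y = density lborel (\<lambda>x. tdens p n (Suc (Suc k')) x y)"
    unfolding pback_def a2(4) using a2 nk(3) by simp
  have Hl: "(\<lambda>z. H n h z) \<in> borel_measurable lborel" using Hm[OF hm] by simp
  show ?thesis
    unfolding e1 e2 nk(2)
    apply (subst nn_integral_density[OF tdx Hl])
    apply (subst nn_integral_density[OF tdx])
     apply (simp add: hm)
    apply (rule stepS[OF hm])
    done
qed

lemma mainnn:
  assumes "k \<le> N" and "h \<in> borel_measurable borel"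
  shows "(\<integral>\<^sup>+ zw. h (fst zw) * ennreal (snd zw) \<partial>Ylaw p psi N y k) = (\<integral>\<^sup>+ x. h x \<partial>pback p (N - k) N y)"
  using assms
proof (induction k arbitrary: h)
  case 0
  have "(\<integral>\<^sup>+ zw. h (fst zw) * ennreal (snd zw) \<partial>Ylaw p psi N y 0) = h y"
    by (simp add: nn_integral_return gm[OF 0(2)])
  also have "\<dots> = (\<integral>\<^sup>+ x. h x \<partial>pback p (N - 0) N y)"
    by (simp add: pback_def nn_integral_return 0(2))
  finally show ?case .
next
  case (Suc k)
  have k: "k < N" using Suc.prems by simp
  have hm: "h \<in> borel_measurable borel" using Suc.prems by simp
  have "(\<integral>\<^sup>+ zw. h (fst zw) * ennreal (snd zw) \<partial>Ylaw p psi N y (Suc k))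
      = (\<integral>\<^sup>+ zw. (\<integral>\<^sup>+ u. h (fst u) * ennreal (snd u) \<partial>K k zw) \<partial>Ylaw p psi N y k)"
    unfolding Y_Suc by (rule nn_integral_bind[OF gm[OF hm] K_meas_Y[OF k]])
  also have "\<dots> = (\<integral>\<^sup>+ zw. H (N - k - 1) h (fst zw) * ennreal (snd zw) \<partial>Ylaw p psi N y k)"
  proof (rule nn_integral_cong_AE)
    show "AE zw in Ylaw p psi N y k. (\<integral>\<^sup>+ u. h (fst u) * ennreal (snd u) \<partial>K k zw) = H (N - k - 1) h (fst zw) * ennreal (snd zw)"
    proof (rule eventually_mono[OF AE_pos[OF less_imp_le[OF k]]])
      fix zw :: "'a \<times> real" assume w: "0 < snd zw"
      obtain z w where zw: "zw = (z, w)" by force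
      show "(\<integral>\<^sup>+ u. h (fst u) * ennreal (snd u) \<partial>K k zw) = H (N - k - 1) h (fst zw) * ennreal (snd zw)"
        unfolding zw fst_conv snd_conv
        by (rule inner[OF k _ hm]) (use w zw in simp)
    qed
  qed
  also have "\<dots> = (\<integral>\<^sup>+ x. H (N - k - 1) h x \<partial>pback p (N - k) N y)"
    by (rule Suc.IH[OF less_imp_le[OF k] Hm[OF hm]])
  also have "\<dots> = (\<integral>\<^sup>+ x. h x \<partial>pback p (N - Suc k) N y)"
    by (rule step[OF k hm])
  finally show ?case .
qed


lemma final:
  assumes nN: "n \<le> N" and g_meas: "g \<in> borel_measurable borel"
  shows "(\<integral>x. g x \<partial>pback p n N y) = (\<integral>zw. g (fst zw) * snd zw \<partial>Ylaw p psi N y (N - n))"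
proof -
  define k where "k = N - n"
  have kN: "k \<le> N" by (simp add: k_def)
  have nk: "N - k = n" using nN by (simp add: k_def)
  define Y where "Y = Ylaw p psi N y k"
  define M where "M = density Y (\<lambda>zw. ennreal (snd zw))"
  have SY: "sets Y = sets borel" unfolding Y_def by (rule sets_Y)
  have SM: "sets M = sets borel" unfolding M_def using SY by simp
  have spM: "space M = space Y" unfolding M_def by simp
  have sndm: "(\<lambda>zw. snd zw) \<in> borel_measurable Y"
    unfolding measurable_cong_sets[OF SY refl] by (rule snd_b)
  have sndm': "(\<lambda>zw. ennreal (snd zw)) \<in> borel_measurable Y"
    by (rule measurable_compose[OF sndm measurable_ennreal])
  have fstY: "(\<lambda>zw. fst zw) \<in> Y \<rightarrow>\<^sub>M borel"
    unfolding measurable_cong_sets[OF SY refl] by (rule fst_b)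
  have fstm: "(\<lambda>zw. fst zw) \<in> M \<rightarrow>\<^sub>M borel"
    unfolding measurable_cong_sets[OF SM refl] by (rule fst_b)
  have SP: "sets (pback p n N y) = sets borel" by (simp add: pback_def)
  have meq: "distr M borel fst = pback p n N y"
  proof (rule measure_eqI)
    show "sets (distr M borel fst) = sets (pback p n N y)" using SP by simp
    fix A assume A: "A \<in> sets (distr M borel fst)"
    then have Ab: "A \<in> sets borel" by simp
    have As: "fst -` A \<inter> space Y \<in> sets Y" by (rule measurable_sets[OF fstY Ab])
    have im: "indicator A \<in> borel_measurable borel" using Ab by simp
    have "emeasure (distr M borel fst) A = emeasure M (fst -` A \<inter> space M)"
      by (rule emeasure_distr[OF fstm Ab])
    also have "\<dots> = (\<integral>\<^sup>+ zw. ennreal (snd zw) * indicator (fst -` A \<inter> space Y) zw \<partial>Y)"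
      unfolding M_def spM[unfolded M_def] by (rule emeasure_density[OF sndm' As])
    also have "\<dots> = (\<integral>\<^sup>+ zw. indicator A (fst zw) * ennreal (snd zw) \<partial>Y)"
      by (rule nn_integral_cong) (simp add: indicator_def)
    also have "\<dots> = (\<integral>\<^sup>+ x. indicator A x \<partial>pback p (N - k) N y)"
      unfolding Y_def by (rule mainnn[OF kN im])
    also have "\<dots> = emeasure (pback p n N y) A"
      unfolding nk by (rule nn_integral_indicator) (simp add: SP Ab)
    finally show "emeasure (distr M borel fst) A = emeasure (pback p n N y) A" .
  qed
  have AEn: "AE zw in Y. 0 \<le> snd zw"
    unfolding Y_def by (rule eventually_mono[OF AE_pos[OF kN]]) simp
  have gfm: "(\<lambda>zw. g (fst zw)) \<in> borel_measurable Y"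
    by (rule measurable_compose[OF fstY g_meas])
  have "(\<integral>x. g x \<partial>pback p n N y) = (\<integral>x. g x \<partial>distr M borel fst)"
    by (simp only: meq)
  also have "\<dots> = (\<integral>zw. g (fst zw) \<partial>M)"
    by (rule integral_distr[OF fstm g_meas])
  also have "\<dots> = (\<integral>zw. snd zw *\<^sub>R g (fst zw) \<partial>Y)"
    unfolding M_def by (rule integral_density[OF gfm sndm AEn])
  also have "\<dots> = (\<integral>zw. g (fst zw) * snd zw \<partial>Y)"
    by (simp add: mult.commute)
  finally show ?thesis unfolding Y_def k_def .
qed

end

theorem theorem2:
  fixes p :: "nat \<Rightarrow> 'a::euclidean_space \<Rightarrow> 'a \<Rightarrow> real"
    and psi :: "nat \<Rightarrow> 'a \<Rightarrow> 'a \<Rightarrow> real"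
    and N n :: nat and y :: 'a and g :: "'a \<Rightarrow> real"
  assumes p_meas: "\<And>k. (\<lambda>(x, z). p k x z) \<in> borel_measurable borel"
    and p_nonneg: "\<And>k x z. p k x z \<ge> 0"
    and p_prob: "\<And>k x. prob_space (density lborel (\<lambda>z. ennreal (p k x z)))"
    and psi_meas: "\<And>m. m < N \<Longrightarrow> (\<lambda>(u, z). psi m u z) \<in> borel_measurable borel"
    and psi_pos: "\<And>m u z. m < N \<Longrightarrow> psi m u z > 0"
    and q_prob: "\<And>m u. m < N \<Longrightarrow> prob_space (density lborel (\<lambda>z. ennreal (qdens p psi N m u z)))"
    and nN: "n \<le> N"
    and g_meas: "g \<in> borel_measurable borel"
    and g_int: "integrable (pback p n N y) g"
  shows "(\<integral>x. g x \<partial>pback p n N y) = (\<integral>zw. g (fst zw) * snd zw \<partial>Ylaw p psi N y (N - n))"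
  by (rule final[OF p_meas p_nonneg psi_meas psi_pos q_prob nN g_meas])

end
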